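(* Let $A$ be an $m\times n$ matrix with nonnegative entries in $[0,1]$ and no zero column, and let $H$ be the smallest nonzero entry of $A$. Then, for DIMSUM with parameter $\gamma$, the expected number of values emitted to any single key $(i,j)$ is at most $\gamma/H^2$ (independent of $m$).
   Context: Let $A=(a_{ki})$ be an $m\times n$ real matrix with rows $r_1,\dots,r_m$ and columns $c_1,\dots,c_n$; $\|c_i\|$ is the Euclidean norm of column $i$ (assumed nonzero). DIMSUM with parameter $\gamma>0$ is the following randomized procedure. For each pair of distinct column indices $(i,j)$ set $p_{ij}=\min\!\left(1,\frac{\gamma}{\|c_i\|\|c_j\|}\right)$. For each row $k$ and each pair $(i,j)$ with $a_{ki}a_{kj}\neq 0$, independently (over all $k$ and all pairs) with probability $p_{ij}$ the value $a_{ki}a_{kj}$ is emitted to key $(i,j)$ (one "emission"). *)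

theory Defs
  imports "HOL-Probability.Probability"
begin

text \<open>An m x n real matrix is represented as a function a :: nat => nat => real,
  where a k i is the entry in row k < m, column i < n.\<close>

definition col_norm :: "(nat \<Rightarrow> nat \<Rightarrow> real) \<Rightarrow> nat \<Rightarrow> nat \<Rightarrow> real" where
  "col_norm a m i = sqrt (\<Sum>k<m. (a k i)\<^sup>2)"

definition dimsum_prob :: "real \<Rightarrow> (nat \<Rightarrow> nat \<Rightarrow> real) \<Rightarrow> nat \<Rightarrow> nat \<Rightarrow> nat \<Rightarrow> real" where
  "dimsum_prob \<gamma> a m i j = min 1 (\<gamma> / (col_norm a m i * col_norm a m j))"

definition dimsum_events :: "(nat \<Rightarrow> nat \<Rightarrow> real) \<Rightarrow> nat \<Rightarrow> nat \<Rightarrow> (nat \<times> nat \<times> nat) set" where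
  "dimsum_events a m n = {(k, i, j). k < m \<and> i < n \<and> j < n \<and> i \<noteq> j \<and> a k i * a k j \<noteq> 0}"

definition dimsum_pmf :: "real \<Rightarrow> (nat \<Rightarrow> nat \<Rightarrow> real) \<Rightarrow> nat \<Rightarrow> nat \<Rightarrow> (nat \<times> nat \<times> nat \<Rightarrow> bool) pmf" where
  "dimsum_pmf \<gamma> a m n = Pi_pmf (dimsum_events a m n) False
     (\<lambda>(k, i, j). bernoulli_pmf (dimsum_prob \<gamma> a m i j))"

definition emissions_to :: "nat \<Rightarrow> (nat \<times> nat \<times> nat \<Rightarrow> bool) \<Rightarrow> nat \<Rightarrow> nat \<Rightarrow> nat" where
  "emissions_to m \<omega> i j = card {k. k < m \<and> \<omega> (k, i, j)}"

definition smallest_nonzero_entry :: "(nat \<Rightarrow> nat \<Rightarrow> real) \<Rightarrow> nat \<Rightarrow> nat \<Rightarrow> real" where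
  "smallest_nonzero_entry a m n = Min {a k i | k i. k < m \<and> i < n \<and> a k i \<noteq> 0}"

end

theory Submission
  imports Defs
begin

theorem theorem6:
  fixes a :: "nat \<Rightarrow> nat \<Rightarrow> real" and m n :: nat and \<gamma> :: real
  assumes gamma_pos: "\<gamma> > 0"
    and entries: "\<And>k i. k < m \<Longrightarrow> i < n \<Longrightarrow> 0 \<le> a k i \<and> a k i \<le> 1"
    and no_zero_col: "\<And>i. i < n \<Longrightarrow> \<exists>k<m. a k i \<noteq> 0"
    and key: "i < n" "j < n" "i \<noteq> j"
  shows "measure_pmf.expectation (dimsum_pmf \<gamma> a m n) (\<lambda>\<omega>. real (emissions_to m \<omega> i j))
           \<le> \<gamma> / (smallest_nonzero_entry a m n)\<^sup>2"
proof -
  define E where "E = dimsum_events a m n"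
  define P where "P = dimsum_pmf \<gamma> a m n"
  define H where "H = smallest_nonzero_entry a m n"
  define S where "S = {k. k < m \<and> a k i * a k j \<noteq> 0}"
  define N where "N = card S"
  define ci where "ci = col_norm a m i"
  define cj where "cj = col_norm a m j"
  define p where "p = dimsum_prob \<gamma> a m i j"
  have finE: "finite E"
    by (rule finite_subset[of _ "{..<m} \<times> {..<n} \<times> {..<n}"]) (auto simp: E_def dimsum_events_def)
  let ?Hset = "{a k i | k i. k < m \<and> i < n \<and> a k i \<noteq> 0}"
  have finH: "finite ?Hset"
  proof -
    have "?Hset \<subseteq> (\<lambda>(k,i). a k i) ` ({..<m} \<times> {..<n})" by auto
    thus ?thesis by (rule finite_subset) auto
  qed
  have Hle: "H \<le> a k l" if "k < m" "l < n" "a k l \<noteq> 0" for k l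
    unfolding H_def smallest_nonzero_entry_def using that finH by (intro Min_le) auto
  obtain k0 where "k0 < m" "a k0 i \<noteq> 0" using no_zero_col key by blast
  hence Hne: "?Hset \<noteq> {}" using key by blast
  have Hpos: "H > 0"
  proof -
    have "H \<in> ?Hset" unfolding H_def smallest_nonzero_entry_def using finH Hne by (rule Min_in)
    then obtain k l where "H = a k l" "k < m" "l < n" "a k l \<noteq> 0" by blast
    with entries[of k l] show ?thesis by auto
  qed
  have colpos: "col_norm a m l > 0" if ln: "l < n" for l
  proof -
    obtain k where k: "k < m" "a k l \<noteq> 0" using no_zero_col[OF ln] by blast
    have "0 < (a k l)\<^sup>2" using k by simp
    also have "\<dots> \<le> (\<Sum>k<m. (a k l)\<^sup>2)" using k by (intro member_le_sum) auto
    finally show ?thesis unfolding col_norm_def by simp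
  qed
  have colge: "col_norm a m l \<ge> sqrt (real N) * H" if "l = i \<or> l = j" for l
  proof -
    have l: "l < n" using that key by auto
    have "real N * H\<^sup>2 = (\<Sum>k\<in>S. H\<^sup>2)" by (simp add: N_def)
    also have "\<dots> \<le> (\<Sum>k\<in>S. (a k l)\<^sup>2)"
    proof (rule sum_mono)
      fix k assume "k \<in> S"
      hence k: "k < m" "a k l \<noteq> 0" using that unfolding S_def by auto
      have "H \<le> a k l" using Hle[OF k(1) l k(2)] .
      thus "H\<^sup>2 \<le> (a k l)\<^sup>2" using Hpos by (intro power_mono) auto
    qed
    also have "\<dots> \<le> (\<Sum>k<m. (a k l)\<^sup>2)" by (intro sum_mono2) (auto simp: S_def)
    finally have "sqrt (real N * H\<^sup>2) \<le> col_norm a m l" unfolding col_norm_def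
      by (rule real_sqrt_le_mono)
    thus ?thesis using Hpos by (simp add: real_sqrt_mult)
  qed
  have cipos: "ci > 0" and cjpos: "cj > 0" using colpos key by (auto simp: ci_def cj_def)
  have p01: "0 \<le> p" "p \<le> 1"
    using gamma_pos cipos cjpos by (auto simp: p_def dimsum_prob_def ci_def cj_def)
  have comp: "measure_pmf.expectation P (\<lambda>\<omega>. if \<omega> (k,i,j) then 1 else 0 :: real)
      = (if k \<in> S then p else 0)" for k
  proof -
    have "measure_pmf.expectation P (\<lambda>\<omega>. if \<omega> (k,i,j) then 1 else 0 :: real)
       = measure_pmf.expectation (map_pmf (\<lambda>f. f (k,i,j)) P) (\<lambda>b. if b then 1 else 0 :: real)"
      by simp
    also have "map_pmf (\<lambda>f. f (k,i,j)) P = (if (k,i,j) \<in> E then bernoulli_pmf p else return_pmf False)"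
      unfolding P_def dimsum_pmf_def E_def[symmetric] using finE
      by (subst Pi_pmf_component) (auto simp: p_def)
    also have "(k,i,j) \<in> E \<longleftrightarrow> k \<in> S" using key by (auto simp: E_def S_def dimsum_events_def)
    finally show ?thesis using p01 by auto
  qed
  have "measure_pmf.expectation P (\<lambda>\<omega>. real (emissions_to m \<omega> i j))
      = measure_pmf.expectation P (\<lambda>\<omega>. \<Sum>k<m. if \<omega> (k,i,j) then 1 else 0 :: real)"
  proof -
    have "real (emissions_to m \<omega> i j) = (\<Sum>k<m. if \<omega> (k,i,j) then 1 else 0 :: real)" for \<omega>
    proof -
      have "(\<Sum>k<m. if \<omega> (k,i,j) then 1 else 0 :: real) = (\<Sum>k\<in>{k. k < m \<and> \<omega> (k,i,j)}. 1)"
        by (subst sum.inter_filter[symmetric]) (auto intro: sum.cong)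
      thus ?thesis by (simp add: emissions_to_def)
    qed
    thus ?thesis by simp
  qed
  also have "\<dots> = (\<Sum>k<m. measure_pmf.expectation P (\<lambda>\<omega>. if \<omega> (k,i,j) then 1 else 0 :: real))"
    by (rule Bochner_Integration.integral_sum)
       (auto intro!: measure_pmf.integrable_const_bound[where B=1])
  also have "\<dots> = (\<Sum>k<m. if k \<in> S then p else 0)" by (simp add: comp)
  also have "\<dots> = real N * p"
    by (subst sum.inter_filter[symmetric]) (auto simp: N_def S_def intro!: arg_cong[where f=card])
  also have "\<dots> \<le> \<gamma> / H\<^sup>2"
  proof (cases "N = 0")
    case True thus ?thesis using gamma_pos Hpos by simp
  next
    case False
    have "real N * p \<le> real N * (\<gamma> / (ci * cj))"
      by (intro mult_left_mono) (auto simp: p_def dimsum_prob_def ci_def cj_def)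
    also have "ci * cj \<ge> (sqrt (real N) * H) * (sqrt (real N) * H)"
      using colge[of i] colge[of j] Hpos cipos unfolding ci_def cj_def
      by (intro mult_mono) auto
    hence "ci * cj \<ge> real N * H\<^sup>2" by (simp add: power2_eq_square algebra_simps)
    hence "\<gamma> / (ci * cj) \<le> \<gamma> / (real N * H\<^sup>2)"
      using False Hpos gamma_pos cipos cjpos by (intro divide_left_mono) auto
    hence "real N * (\<gamma> / (ci * cj)) \<le> real N * (\<gamma> / (real N * H\<^sup>2))"
      by (intro mult_left_mono) auto
    also have "\<dots> = \<gamma> / H\<^sup>2" using False by simp
    finally show ?thesis by simp
  qed
  finally show ?thesis by (simp add: P_def H_def)
qed

end
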